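(* Let $2\le m\le n$ be natural numbers with $n-m=k(m-1)$ for a natural number $k$, and let $l$ be a positive integer with $l\equiv m\pmod{m-1}$. Let $P\subset a_{m-1}\{a_0,\dots,a_{m-1}\}^*$ be an $l$-element set such that $\{w: a_{m-1}w\in P\}$ is a complete prefix code over the alphabet $\{a_0,\dots,a_{m-1}\}$, with its elements listed as $p_l<_{dict}p_{l-1}<_{dict}\dots<_{dict}p_1$, and let $1\le i\le l$. Then the successors $(p_i)'_1,\dots,(p_i)'_k$ (with respect to $P$) are well defined. Moreover, letting $\widetilde{P}=(P\setminus\{p_i\})\cup\{p_ia_0,\dots,p_ia_{m-1}\}$, the successors with respect to $\widetilde{P}$ of the new elements are: for $1\le j\le m-1$ and $1\le r\le k$, $$(p_ia_j)'_r=p_i\,a_{m+(m-1-j)k+r-1},$$ (so $(p_ia_{m-1})'_1=p_ia_m,\dots,(p_ia_{m-1})'_k=p_ia_{m+k-1}$, $(p_ia_{m-2})'_1=p_ia_{m+k}$, ..., $(p_ia_1)'_k=p_ia_{n-1}$), and for $1\le r\le k$, $$(p_ia_0)'_r=(p_i)'_r,$$ where the right-hand side is the $r$-th successor of $p_i$ with respect to $P$.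
   Context: Let $\mathcal{A}_n=\{a_0,a_1,\dots,a_{n-1}\}$ be an alphabet of $n$ distinct letters with linear order $a_0<a_1<\dots<a_{n-1}$, containing $\mathcal{A}_m=\{a_0,\dots,a_{m-1}\}$, and let $\mathcal{A}_{m,n}=\{a_m,\dots,a_{n-1}\}$. Words are finite strings of letters (including the empty word $\varepsilon$), and juxtaposition denotes concatenation. $u<_{pref}v$ means $v=uw$ for a nonempty word $w$. Dictionary order: $u\le_{dict}v$ iff $u$ is a prefix of $v$, or $u=p\alpha s$, $v=p\beta t$ with letters $\alpha<\beta$. For a finite set $P$ of words, $\operatorname{spref}(P)=\{w: \exists p\in P,\ w<_{pref}p\}$ (strict prefixes, including $\varepsilon$), and $\operatorname{spref}(P)\mathcal{A}_{m,n}=\{xa_j: x\in\operatorname{spref}(P),\ a_j\in\mathcal{A}_{m,n}\}$. Successors: let $P\subset a_{m-1}\{a_0,\dots,a_{m-1}\}^*$ be as in the claim, with elements $p_1,\dots,p_l$ listed in reverse dictionary order ($p_1$ the largest). The successors $(p_s)'_r$ ($1\le s\le l$, $1\le r\le k$) are defined inductively in the order $(p_1)'_1,\dots,(p_1)'_k,(p_2)'_1,\dots,(p_2)'_k,\dots,(p_l)'_k$: writing $P_{s,r-1}$ for the set of all successors already defined before $(p_s)'_r$ in this order, $$(p_s)'_r=\min{}_{\le_{dict}}\{xa_j\in\operatorname{spref}(P)\mathcal{A}_{m,n}:\ p_s<_{dict}xa_j,\ xa_j\notin P_{s,r-1}\}.$$ "Well defined" means the set over which the minimum is taken is nonempty at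 each step. Successors with respect to $\widetilde{P}$ are defined the same way with $\widetilde{P}$ (listed in its own reverse dictionary order) in place of $P$. *)

theory Defs
  imports Main
begin

text \<open>Letters a_j are represented by natural numbers j; words are nat lists;
  juxtaposition is list append.\<close>

definition is_prefix :: "nat list \<Rightarrow> nat list \<Rightarrow> bool" where
  "is_prefix u v \<longleftrightarrow> (\<exists>w. v = u @ w)"

definition strict_prefix :: "nat list \<Rightarrow> nat list \<Rightarrow> bool" where
  "strict_prefix u v \<longleftrightarrow> (\<exists>w. w \<noteq> [] \<and> v = u @ w)"

definition dict_le :: "nat list \<Rightarrow> nat list \<Rightarrow> bool" where
  "dict_le u v \<longleftrightarrow> is_prefix u v \<or>
     (\<exists>p \<alpha> s \<beta> t. u = p @ [\<alpha>] @ s \<and> v = p @ [\<beta>] @ t \<and> \<alpha> < \<beta>)"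

definition dict_less :: "nat list \<Rightarrow> nat list \<Rightarrow> bool" where
  "dict_less u v \<longleftrightarrow> dict_le u v \<and> u \<noteq> v"

definition words :: "nat \<Rightarrow> nat list set" where
  "words m = {w. set w \<subseteq> {0..<m}}"

definition prefix_code :: "nat \<Rightarrow> nat list set \<Rightarrow> bool" where
  "prefix_code m C \<longleftrightarrow> C \<subseteq> words m \<and> (\<forall>u\<in>C. \<forall>v\<in>C. \<not> strict_prefix u v)"

definition complete_prefix_code :: "nat \<Rightarrow> nat list set \<Rightarrow> bool" where
  "complete_prefix_code m C \<longleftrightarrow> prefix_code m C \<and>
     (\<forall>w\<in>words m. \<exists>c\<in>C. is_prefix c w \<or> is_prefix w c)"

definition spref :: "nat list set \<Rightarrow> nat list set" where
  "spref P = {w. \<exists>p\<in>P. strict_prefix w p}"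

definition cands :: "nat list set \<Rightarrow> nat \<Rightarrow> nat \<Rightarrow> nat list set" where
  "cands P m n = {x @ [j] | x j. x \<in> spref P \<and> m \<le> j \<and> j < n}"

text \<open>Position of q in Q listed in reverse dictionary order (largest = position 1),
  and the element at position s.\<close>
definition pos :: "nat list set \<Rightarrow> nat list \<Rightarrow> nat" where
  "pos Q q = card {x\<in>Q. dict_less q x} + 1"

definition pel :: "nat list set \<Rightarrow> nat \<Rightarrow> nat list" where
  "pel Q s = (THE p. p \<in> Q \<and> pos Q p = s)"

definition dict_min :: "nat list set \<Rightarrow> nat list" where
  "dict_min C = (THE c. c \<in> C \<and> (\<forall>d\<in>C. dict_le c d))"

text \<open>The first t successors in the order (p_1)'_1,...,(p_1)'_k,(p_2)'_1,...;
  None if some minimum is taken over an empty set (not well defined).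
  Step number t (0-based) defines (p_s)'_r with s = t div k + 1, r = t mod k + 1.\<close>
fun succ_opt :: "nat list set \<Rightarrow> nat \<Rightarrow> nat \<Rightarrow> nat \<Rightarrow> nat \<Rightarrow> nat list list option" where
  "succ_opt P m n k 0 = Some []"
| "succ_opt P m n k (Suc t) =
     (case succ_opt P m n k t of
        None \<Rightarrow> None
      | Some prev \<Rightarrow>
          (let s = t div k + 1;
               C = {c \<in> cands P m n. dict_less (pel P s) c \<and> c \<notin> set prev}
           in if C = {} then None else Some (prev @ [dict_min C])))"

definition succ :: "nat list set \<Rightarrow> nat \<Rightarrow> nat \<Rightarrow> nat \<Rightarrow> nat \<Rightarrow> nat \<Rightarrow> nat list" where
  "succ P m n k s r = the (succ_opt P m n k (s * k)) ! ((s - 1) * k + (r - 1))"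

definition succ_of :: "nat list set \<Rightarrow> nat \<Rightarrow> nat \<Rightarrow> nat \<Rightarrow> nat list \<Rightarrow> nat \<Rightarrow> nat list" where
  "succ_of Q m n k q r = succ Q m n k (pos Q q) r"

end

theory Submission
  imports Defs "HOL-Library.List_Lexorder"
begin

lemma less_list_iff: "u < (v::nat list) \<longleftrightarrow> (\<exists>a w. v = u @ a # w) \<or>
      (\<exists>p \<alpha> s \<beta> t. u = p @ \<alpha> # s \<and> v = p @ \<beta> # t \<and> \<alpha> < \<beta>)"
proof
  assume "u < v"
  then have "(u, v) \<in> lexord {(a, b). a < b}" by (simp add: list_less_def)
  then show "(\<exists>a w. v = u @ a # w) \<or>
      (\<exists>p \<alpha> s \<beta> t. u = p @ \<alpha> # s \<and> v = p @ \<beta> # t \<and> \<alpha> < \<beta>)"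
    unfolding lexord_def by blast
next
  assume "(\<exists>a w. v = u @ a # w) \<or>
      (\<exists>p \<alpha> s \<beta> t. u = p @ \<alpha> # s \<and> v = p @ \<beta> # t \<and> \<alpha> < \<beta>)"
  then have "(u, v) \<in> lexord {(a, b). a < b}" unfolding lexord_def by blast
  then show "u < v" by (simp add: list_less_def)
qed

lemma dict_le_iff: "dict_le u v \<longleftrightarrow> u \<le> (v::nat list)"
proof -
  have "is_prefix u v \<longleftrightarrow> u = v \<or> (\<exists>a w. v = u @ a # w)" unfolding is_prefix_def
    by (metis append_Nil2 neq_Nil_conv)
  then show ?thesis unfolding dict_le_def list_le_def less_list_iff append_Cons append_Nil
    by blast
qed

lemma dict_less_iff: "dict_less u v \<longleftrightarrow> u < (v::nat list)"
  unfolding dict_less_def dict_le_iff by auto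

lemma lex_diff: "(a::nat) < b \<Longrightarrow> z @ a # s < z @ b # t"
  by (induct z) auto

lemma lex_ext: "w \<noteq> [] \<Longrightarrow> (z::nat list) < z @ w"
  by (induct z) (auto simp: neq_Nil_conv)

lemma first_diff: "\<not> is_prefix p q \<Longrightarrow> \<not> is_prefix q p \<Longrightarrow>
   \<exists>z a b s t. a \<noteq> b \<and> p = z @ a # s \<and> q = z @ b # t"
proof (induct p arbitrary: q)
  case Nil then show ?case by (simp add: is_prefix_def)
next
  case (Cons x p)
  show ?case
  proof (cases q)
    case Nil then show ?thesis using Cons by (simp add: is_prefix_def)
  next
    case (Cons y q')
    show ?thesis
    proof (cases "x = y")
      case True
      with Cons.prems Cons have "\<not> is_prefix p q'" "\<not> is_prefix q' p" by (auto simp: is_prefix_def)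
      from Cons.hyps[OF this] obtain z a b s t where "a \<noteq> b" "p = z @ a # s" "q' = z @ b # t" by blast
      then show ?thesis using True Cons by (intro exI[of _ "x#z"]) auto
    next
      case False then show ?thesis using Cons by (intro exI[of _ "[]"]) auto
    qed
  qed
qed

definition strip0 :: "nat list \<Rightarrow> nat list" where
  "strip0 q = rev (dropWhile ((=) 0) (rev q))"

lemma strip0_app: "q = strip0 q @ replicate (length q - length (strip0 q)) 0"
proof -
  have "rev q = takeWhile ((=) 0) (rev q) @ dropWhile ((=) 0) (rev q)" by simp
  moreover have "takeWhile ((=) 0) (rev q) = replicate (length (takeWhile ((=) 0) (rev q))) 0"
    by (metis (mono_tags) replicate_length_same set_takeWhileD)
  ultimately have "q = strip0 q @ replicate (length (takeWhile ((=) 0) (rev q))) 0"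
    unfolding strip0_def by (metis rev_append rev_replicate rev_rev_ident)
  then show ?thesis by (metis add_diff_cancel_left' length_append length_replicate)
qed

lemma strip0_last: "strip0 q \<noteq> [] \<Longrightarrow> last (strip0 q) \<noteq> 0"
  unfolding strip0_def by (metis hd_dropWhile last_rev rev_is_Nil_conv)

lemma strip0_nz: "c \<noteq> 0 \<Longrightarrow> strip0 (u @ c # replicate e 0) = u @ [c]"
proof -
  assume c: "c \<noteq> 0"
  have "rev (u @ c # replicate e 0) = replicate e 0 @ c # rev u" by simp
  moreover have "dropWhile ((=) 0) (replicate e 0 @ c # rev u) = c # rev u"
    using c by (induct e) auto
  ultimately show ?thesis unfolding strip0_def by simp
qed

lemma decomp: "(q::nat list) \<noteq> [] \<Longrightarrow> hd q \<noteq> 0 \<Longrightarrow> \<exists>u c e. q = u @ c # replicate e 0 \<and> c \<noteq> 0"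
proof -
  assume q: "q \<noteq> []" "hd q \<noteq> 0"
  have ne: "strip0 q \<noteq> []"
  proof
    assume "strip0 q = []"
    then have "q = replicate (length q) 0" using strip0_app[of q] by simp
    with q show False by (metis hd_replicate length_0_conv)
  qed
  then obtain u c where "strip0 q = u @ [c]" by (metis append_butlast_last_id)
  moreover have "c \<noteq> 0" using strip0_last[OF ne] calculation by simp
  ultimately show ?thesis using strip0_app[of q] by (metis append.assoc append_Cons append_Nil)
qed

definition fs :: "nat \<Rightarrow> nat \<Rightarrow> nat list \<Rightarrow> nat \<Rightarrow> nat list" where
  "fs m k q r = butlast (strip0 q) @ [m + (m - 1 - last (strip0 q)) * k + r - 1]"

lemma fs_eq: "c \<noteq> 0 \<Longrightarrow> fs m k (u @ c # replicate e 0) r = u @ [m + (m - 1 - c) * k + r - 1]"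
  unfolding fs_def by (simp add: strip0_nz)

lemma decomp_unique: "(c::nat) \<noteq> 0 \<Longrightarrow> c' \<noteq> 0 \<Longrightarrow> u @ c # replicate e 0 = u' @ c' # replicate e' 0 \<Longrightarrow>
   u = u' \<and> c = c' \<and> e = e'"
proof -
  assume h: "c \<noteq> 0" "c' \<noteq> 0" "u @ c # replicate e 0 = u' @ c' # replicate e' 0"
  have "strip0 (u @ c # replicate e 0) = strip0 (u' @ c' # replicate e' 0)" using h(3) by simp
  then have "u @ [c] = u' @ [c']" using h(1,2) strip0_nz by metis
  then have uc: "u = u' \<and> c = c'" by simp
  moreover have "length (u @ c # replicate e 0) = length (u' @ c' # replicate e' 0)" using h(3) by simp
  ultimately have "e = e'" by simp
  with uc show ?thesis by simp
qed

lemma pos_alt: "pos Q q = card {x\<in>Q. q < x} + 1"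
  unfolding pos_def dict_less_iff ..

lemma pos_range: assumes "finite Q" "q \<in> Q" shows "1 \<le> pos Q q \<and> pos Q q \<le> card Q"
proof -
  have "{x\<in>Q. q < x} \<subseteq> Q - {q}" by auto
  then have "card {x\<in>Q. q < x} \<le> card (Q - {q})" using assms by (intro card_mono) auto
  moreover have "card (Q - {q}) = card Q - 1" using assms by simp
  moreover have "card Q \<ge> 1" using assms by (metis One_nat_def Suc_leI card_gt_0_iff empty_iff)
  ultimately show ?thesis unfolding pos_alt by simp
qed

lemma pos_mono: assumes "finite Q" "q \<in> Q" "q' \<in> Q" "q < q'" shows "pos Q q' < pos Q q"
proof -
  have "{x\<in>Q. q' < x} \<subset> {x\<in>Q. q < x}" using assms by auto
  then have "card {x\<in>Q. q' < x} < card {x\<in>Q. q < x}" using assms by (intro psubset_card_mono) auto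
  then show ?thesis unfolding pos_alt by simp
qed

lemma pos_inj: assumes "finite Q" shows "inj_on (pos Q) Q"
proof (rule inj_onI)
  fix x y assume "x \<in> Q" "y \<in> Q" "pos Q x = pos Q y"
  then show "x = y" using pos_mono[OF assms, of x y] pos_mono[OF assms, of y x]
    by (metis less_irrefl neqE)
qed

lemma pos_img: assumes "finite Q" shows "pos Q ` Q = {1..card Q}"
proof -
  have "pos Q ` Q \<subseteq> {1..card Q}" using pos_range[OF assms] by auto
  moreover have "card (pos Q ` Q) = card {1..card Q}" using card_image[OF pos_inj[OF assms]] by simp
  ultimately show ?thesis by (intro card_subset_eq) auto
qed

lemma pel_props: assumes "finite Q" "1 \<le> s" "s \<le> card Q" shows "pel Q s \<in> Q \<and> pos Q (pel Q s) = s"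
proof -
  have "s \<in> pos Q ` Q" using pos_img[OF assms(1)] assms by auto
  then have ex: "\<exists>!p. p \<in> Q \<and> pos Q p = s" using pos_inj[OF assms(1)] by (auto simp: inj_on_def)
  show ?thesis unfolding pel_def by (rule theI'[OF ex])
qed

lemma pel_pos: assumes "finite Q" "q \<in> Q" shows "pel Q (pos Q q) = q"
proof -
  have "pel Q (pos Q q) \<in> Q" "pos Q (pel Q (pos Q q)) = pos Q q"
    using pel_props[OF assms(1)] pos_range[OF assms] by auto
  then show ?thesis using pos_inj[OF assms(1)] assms(2) by (auto simp: inj_on_def)
qed

definition QC :: "nat \<Rightarrow> nat list set \<Rightarrow> bool" where
  "QC m Q \<longleftrightarrow> finite Q \<and> Q \<subseteq> {(m - 1) # w | w. w \<in> words m} \<and>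
     complete_prefix_code m {w. (m - 1) # w \<in> Q}"

lemma QC_elem: "QC m Q \<Longrightarrow> q \<in> Q \<Longrightarrow> \<exists>w. q = (m - 1) # w \<and> set w \<subseteq> {0..<m}"
  unfolding QC_def words_def by blast

lemma QC_letters: "QC m Q \<Longrightarrow> 2 \<le> m \<Longrightarrow> q \<in> Q \<Longrightarrow> q \<noteq> [] \<and> hd q = m - 1 \<and> set q \<subseteq> {0..<m}"
  using QC_elem[of m Q q] by fastforce

lemma QC_free: assumes "QC m Q" "p \<in> Q" "p' \<in> Q" "is_prefix p p'" shows "p = p'"
proof -
  obtain w w' where w: "p = (m - 1) # w" "p' = (m - 1) # w'" using QC_elem assms by metis
  have "w \<in> {w. (m - 1) # w \<in> Q}" "w' \<in> {w. (m - 1) # w \<in> Q}" using w assms by auto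
  then have "\<not> Defs.strict_prefix w w'" using assms(1) unfolding QC_def complete_prefix_code_def prefix_code_def
    by blast
  moreover obtain z where "p' = p @ z" using assms(4) is_prefix_def by blast
  ultimately show ?thesis using w unfolding Defs.strict_prefix_def by auto
qed

lemma QC_comp: assumes "QC m Q" "w \<in> words m"
  shows "\<exists>c. (m - 1) # c \<in> Q \<and> (is_prefix c w \<or> is_prefix w c)"
  using assms unfolding QC_def complete_prefix_code_def by auto

lemma prefix_len: "is_prefix a b \<Longrightarrow> length a \<le> length b"
  unfolding is_prefix_def by auto

lemma pref_common: "xs = ys @ s1 \<Longrightarrow> xs = zs @ s2 \<Longrightarrow> length zs \<le> length ys \<Longrightarrow> \<exists>w. ys = zs @ w"
proof -
  assume h: "xs = ys @ s1" "xs = zs @ s2" "length zs \<le> length ys"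
  then have "ys @ s1 = zs @ s2" by simp
  then obtain us where "(ys = zs @ us \<and> us @ s1 = s2) \<or> (ys @ us = zs \<and> s1 = us @ s2)"
    by (auto simp: append_eq_append_conv2)
  then show ?thesis using h(3) by (metis append.right_neutral add_le_same_cancel1 le_zero_eq length_0_conv length_append)
qed

lemma Q_ext:
  assumes QC: "QC m Q" and m: "2 \<le> m" and x: "x \<in> spref Q" and b: "b < m" and x0: "x = [] \<Longrightarrow> b = m - 1"
  shows "\<exists>e. x @ b # replicate e 0 \<in> Q"
proof -
  obtain p w where p: "p \<in> Q" "w \<noteq> []" "p = x @ w"
    using x unfolding spref_def Defs.strict_prefix_def by blast
  have pl: "p \<noteq> [] \<and> hd p = m - 1 \<and> set p \<subseteq> {0..<m}" using QC_letters[OF QC m p(1)] .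
  obtain v' where v: "x @ [b] = (m - 1) # v'" "set v' \<subseteq> {0..<m}"
  proof (cases x)
    case Nil then show ?thesis using that x0 by auto
  next
    case (Cons y x'')
    then have "y = m - 1" "set x'' \<subseteq> {0..<m}" using pl p(3) by auto
    then show ?thesis using that[of "x'' @ [b]"] Cons b by auto
  qed
  have fin: "finite Q" using QC unfolding QC_def by simp
  define N where "N = Max (length ` Q)"
  define W where "W = v' @ replicate N 0"
  have "W \<in> words m" using v m unfolding W_def words_def by auto
  then obtain c where c: "(m - 1) # c \<in> Q" "is_prefix c W \<or> is_prefix W c" using QC_comp[OF QC] by blast
  have "length ((m - 1) # c) \<in> length ` Q" using c(1) by (rule imageI)
  then have "length ((m - 1) # c) \<le> N" unfolding N_def using fin by (intro Max_ge) auto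
  then have "\<not> is_prefix W c" using prefix_len[of W c] unfolding W_def by auto
  then obtain z where cz: "W = c @ z" using c(2) unfolding is_prefix_def by blast
  show ?thesis
  proof (cases "length v' \<le> length c")
    case True
    then obtain w2 where "c = v' @ w2" using pref_common[of W c z v' "replicate N 0"] cz W_def by auto
    then have "v' @ replicate N 0 = v' @ w2 @ z" using cz W_def by simp
    then have "replicate N 0 = w2 @ z" by simp
    then have "w2 = replicate (length w2) 0"
      by (metis append_eq_conv_conj replicate_eq_replicate take_replicate length_take min_def)
    then have "(m - 1) # c = x @ b # replicate (length w2) 0" using v \<open>c = v' @ w2\<close>
      by (metis Cons_eq_appendI append.assoc append_Cons append_Nil)
    then show ?thesis using c(1) by metis
  next
    case False
    then obtain w2 where w2: "v' = c @ w2" using pref_common[of W v' "replicate N 0" c z] cz W_def by auto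
    then have "x @ [b] = ((m - 1) # c) @ w2" using v by simp
    moreover have "length ((m - 1) # c) \<le> length x" using False v(1)
      by (metis Suc_le_eq length_Cons length_append_singleton not_le Suc_less_eq)
    ultimately obtain w3 where "x = ((m - 1) # c) @ w3" using pref_common[of "x @ [b]" x "[b]" "(m - 1) # c" w2] by auto
    then have "is_prefix ((m - 1) # c) p" using p(3) unfolding is_prefix_def by auto
    then have "(m - 1) # c = p" using QC_free[OF QC c(1) p(1)] by simp
    then show ?thesis using \<open>length ((m - 1) # c) \<le> length x\<close> p(2,3) by simp
  qed
qed

lemma Q_decomp: assumes "QC m Q" "2 \<le> m" "q \<in> Q"
  shows "\<exists>u c e. q = u @ c # replicate e 0 \<and> c \<noteq> 0 \<and> c < m \<and> set u \<subseteq> {0..<m} \<and> (u = [] \<longrightarrow> c = m - 1)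
     \<and> (u \<noteq> [] \<longrightarrow> hd u = m - 1)"
proof -
  have l: "q \<noteq> [] \<and> hd q = m - 1 \<and> set q \<subseteq> {0..<m}" using QC_letters assms by blast
  then have "hd q \<noteq> 0" using assms(2) by simp
  then obtain u c e where q: "q = u @ c # replicate e 0" "c \<noteq> 0" using decomp l by blast
  moreover have "c < m" "set u \<subseteq> {0..<m}" using l q by auto
  moreover have "u = [] \<longrightarrow> c = m - 1" using l q by auto
  moreover have "u \<noteq> [] \<longrightarrow> hd u = m - 1" using l q by auto
  ultimately show ?thesis by blast
qed

lemma blk_lt: "1 \<le> (c::nat) \<Longrightarrow> c \<le> m - 1 \<Longrightarrow> 1 \<le> r \<Longrightarrow> r \<le> k \<Longrightarrow> (m - 1 - c) * k + r - 1 < (m - 1) * k"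
proof -
  assume h: "1 \<le> c" "c \<le> m - 1" "1 \<le> r" "r \<le> k"
  have "(m - 1 - c + 1) * k \<le> (m - 1) * k" using h by (intro mult_le_mono1) linarith
  then show ?thesis using h by (simp add: algebra_simps)
qed

lemma blk_mono: "c' < (c::nat) \<Longrightarrow> c \<le> m - 1 \<Longrightarrow> 1 \<le> r' \<Longrightarrow> 1 \<le> r \<Longrightarrow> r \<le> k \<Longrightarrow>
   (m - 1 - c) * k + r - 1 < (m - 1 - c') * k + r' - 1"
proof -
  assume h: "c' < c" "c \<le> m - 1" "1 \<le> r'" "1 \<le> r" "r \<le> k"
  define A where "A = m - 1 - c"
  define B where "B = m - 1 - c'"
  have "(A + 1) * k \<le> B * k" unfolding A_def B_def using h by (intro mult_le_mono1) linarith
  then have "A * k + k \<le> B * k" by (simp add: algebra_simps)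
  then have "A * k + r - 1 < B * k + r' - 1" using h by linarith
  then show ?thesis unfolding A_def B_def .
qed

lemma divmod_aux: "(\<rho>::nat) < k \<Longrightarrow> (\<rho> + X * k) div k = X \<and> (\<rho> + X * k) mod k = \<rho>"
proof -
  assume h: "\<rho> < k"
  then have k: "k \<noteq> 0" by simp
  have "(\<rho> + X * k) div k = X + \<rho> div k" using div_mult_self1[OF k] by simp
  moreover have "(\<rho> + X * k) mod k = \<rho> mod k" by simp
  ultimately show ?thesis using h by simp
qed

lemma blk_inj: "1 \<le> r \<Longrightarrow> r \<le> k \<Longrightarrow> 1 \<le> r' \<Longrightarrow> r' \<le> k \<Longrightarrow> (X::nat) * k + r - 1 = X' * k + r' - 1 \<Longrightarrow> X = X' \<and> r = r'"
proof -
  assume h: "1 \<le> r" "r \<le> k" "1 \<le> r'" "r' \<le> k" "X * k + r - 1 = X' * k + r' - 1"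
  then have e: "(r - 1) + X * k = (r' - 1) + X' * k" by simp
  have a: "r - 1 < k" "r' - 1 < k" using h by auto
  from divmod_aux[OF a(1), of X] divmod_aux[OF a(2), of X'] e have "X = X'" "r - 1 = r' - 1" by auto
  then show ?thesis using h by simp
qed

lemma append_less_iff: "u @ xs < u @ (ys::nat list) \<longleftrightarrow> xs < ys"
  by (induct u) auto

lemma nth_zero_tail: "q = u @ c # replicate e 0 \<Longrightarrow> length u < i \<Longrightarrow> i < length q \<Longrightarrow> q ! i = 0"
proof -
  assume h: "q = u @ c # replicate e 0" "length u < i" "i < length q"
  then have "q ! i = (c # replicate e 0) ! (i - length u)" by (simp add: nth_append)
  also have "\<dots> = replicate e 0 ! (i - length u - 1)" using h(2) by (simp add: nth_Cons')
  also have "\<dots> = 0" using h by simp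
  finally show ?thesis .
qed

lemma shift_lt: "(A::nat) + r - 1 < B + r' - 1 \<Longrightarrow> 1 \<le> r \<Longrightarrow> 1 \<le> r' \<Longrightarrow> m + A + r - 1 < m + B + r' - 1"
  by arith

context
  fixes m n k :: nat and Q :: "nat list set"
  assumes QC: "QC m Q" and m2: "2 \<le> m" and k1: "1 \<le> k" and nk: "n = m + k * (m - 1)"
begin

lemma fin: "finite Q" using QC unfolding QC_def by simp

lemma fs_cand: assumes "q \<in> Q" "1 \<le> r" "r \<le> k"
  shows "fs m k q r \<in> cands Q m n \<and> q < fs m k q r"
proof -
  obtain u c e where U: "q = u @ c # replicate e 0" "c \<noteq> 0" "c < m" using Q_decomp[OF QC m2 assms(1)] by blast
  have f: "fs m k q r = u @ [m + (m - 1 - c) * k + r - 1]" using U fs_eq by simp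
  have "u \<in> spref Q" using U(1) assms(1) unfolding spref_def Defs.strict_prefix_def by blast
  moreover have "(m - 1 - c) * k + r - 1 < (m - 1) * k" using blk_lt[of c m r k] U assms by simp
  then have "m + (m - 1 - c) * k + r - 1 < n" using nk assms by (simp add: algebra_simps)
  moreover have "m \<le> m + (m - 1 - c) * k + r - 1" using assms by simp
  ultimately have "fs m k q r \<in> cands Q m n" unfolding f cands_def by blast
  moreover have "u @ c # replicate e 0 < u @ (m + (m - 1 - c) * k + r - 1) # []"
    using U(3) assms by (intro lex_diff) simp
  then have "q < fs m k q r" using f U(1) by simp
  ultimately show ?thesis by blast
qed

lemma fs_inj: assumes "q \<in> Q" "q' \<in> Q" "1 \<le> r" "r \<le> k" "1 \<le> r'" "r' \<le> k" "fs m k q r = fs m k q' r'"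
  shows "q = q' \<and> r = r'"
proof -
  obtain u c e where U: "q = u @ c # replicate e 0" "c \<noteq> 0" "c < m" using Q_decomp[OF QC m2 assms(1)] by blast
  obtain u' c' e' where U': "q' = u' @ c' # replicate e' 0" "c' \<noteq> 0" "c' < m" using Q_decomp[OF QC m2 assms(2)] by blast
  have "u @ [m + (m - 1 - c) * k + r - 1] = u' @ [m + (m - 1 - c') * k + r' - 1]"
    using assms(7) U U' fs_eq by simp
  then have uu: "u = u'" and "m + (m - 1 - c) * k + r - 1 = m + (m - 1 - c') * k + r' - 1" by auto
  then have "(m - 1 - c) * k + r - 1 = (m - 1 - c') * k + r' - 1" using assms by simp
  from blk_inj[OF assms(3-6) this] have "m - 1 - c = m - 1 - c'" "r = r'" by auto
  then have cc: "c = c'" using U U' by simp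
  have "q = q'"
  proof (cases "e \<le> e'")
    case True
    then have "q' = q @ replicate (e' - e) 0" using U U' uu cc by (simp add: replicate_add[symmetric])
    then show ?thesis using QC_free[OF QC assms(1,2)] unfolding is_prefix_def by blast
  next
    case False
    then have "q = q' @ replicate (e - e') 0" using U U' uu cc by (simp add: replicate_add[symmetric])
    then show ?thesis using QC_free[OF QC assms(2,1)] unfolding is_prefix_def by blast
  qed
  then show ?thesis using \<open>r = r'\<close> by simp
qed

lemma crux:
  assumes q: "q \<in> Q" and q': "q' \<in> Q" and lt: "q' < q" and r: "1 \<le> r" "r \<le> k" and r': "1 \<le> r'" "r' \<le> k"
    and a1: "q < fs m k q' r'" and a2: "fs m k q' r' < fs m k q r"
  shows False
proof -
  obtain u c e where U: "q = u @ c # replicate e 0" "c \<noteq> 0" "c < m" using Q_decomp[OF QC m2 q] by blast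
  obtain u' c' e' where U': "q' = u' @ c' # replicate e' 0" "c' \<noteq> 0" "c' < m" using Q_decomp[OF QC m2 q'] by blast
  define d where "d = m + (m - 1 - c) * k + r - 1"
  define d' where "d' = m + (m - 1 - c') * k + r' - 1"
  have F: "fs m k q r = u @ [d]" using U fs_eq d_def by simp
  have F': "fs m k q' r' = u' @ [d']" using U' fs_eq d'_def by simp
  have d'm: "m \<le> d'" using r' d'_def by simp
  have ne: "q \<noteq> q'" using lt by auto
  have np: "\<not> is_prefix q' q" "\<not> is_prefix q q'" using QC_free[OF QC q q'] QC_free[OF QC q' q] ne by auto
  obtain z a b s s' where Z: "a \<noteq> b" "q' = z @ a # s'" "q = z @ b # s" using first_diff[OF np] by blast
  have ab: "a < b"
  proof (rule ccontr)
    assume "\<not> a < b"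
    then have "b < a" using Z(1) by simp
    then have "q < q'" using Z lex_diff by simp
    then show False using lt by simp
  qed
  have bm: "b < m" using QC_letters[OF QC m2 q] Z(3) by auto
  have uz: "length z \<le> length u"
  proof (rule ccontr)
    assume "\<not> length z \<le> length u"
    then have l1: "length u < length z" by simp
    have l2: "length z < length q" using Z(3) by simp
    have "q ! length z = 0" using nth_zero_tail[OF U(1) l1 l2] .
    moreover have "q ! length z = b" using Z(3) by simp
    ultimately show False using ab by simp
  qed
  consider (i) "length u' < length z" | (ii) "length u' = length z" | (iii) "length z < length u'" by linarith
  then show False
  proof cases
    case i
    obtain w where w: "z = (u' @ [c']) @ w"
      using pref_common[of q' z "a # s'" "u' @ [c']" "replicate e' 0"] Z(2) U'(1) i by auto
    have "q = (u' @ [c']) @ (w @ b # s)" using Z(3) w by simp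
    then obtain w2 where "u = (u' @ [c']) @ w2"
      using pref_common[of q u "c # replicate e 0" "u' @ [c']" "w @ b # s"] U(1) uz w by auto
    then have "fs m k q r = u' @ c' # (w2 @ [d])" using F by simp
    moreover have "c' < d'" using U'(3) d'm by simp
    ultimately have "fs m k q r < fs m k q' r'" using F' lex_diff by simp
    then show False using a2 by simp
  next
    case ii
    have lu: "length u' \<le> length z" using ii by simp
    obtain w where zw: "z = u' @ w" using pref_common[OF Z(2) U'(1) lu] by blast
    have zu: "z = u'" using zw ii by simp
    have "z @ a # s' = u' @ c' # replicate e' 0" using Z(2) U'(1) by simp
    then have ac: "a = c'" using zu by simp
    have F'': "fs m k q' r' = z @ [d']" using F' zu by simp
    show False
    proof (cases "length u = length z")
      case True
      have lz: "length z \<le> length u" using True by simp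
      have qz: "q = z @ b # s" using Z(3) .
      obtain w where uw: "u = z @ w" using pref_common[OF U(1) qz lz] by blast
      have uz': "u = z" using uw True by simp
      have "z @ c # replicate e 0 = z @ b # s" using U(1) Z(3) uz' by simp
      then have cb: "c = b" by simp
      have "c' < c" using ab ac cb by simp
      have cm: "c \<le> m - 1" using U(3) by simp
      have "(m - 1 - c) * k + r - 1 < (m - 1 - c') * k + r' - 1"
        by (rule blk_mono[OF \<open>c' < c\<close> cm r'(1) r(1) r(2)])
      then have "d < d'" unfolding d_def d'_def using r(1) r'(1) by (rule shift_lt)
      then have "z @ d # [] < z @ d' # []" by (rule lex_diff)
      moreover have "fs m k q r = z @ [d]" using F uz' by simp
      ultimately have "fs m k q r < fs m k q' r'" using F'' by simp
      then show False using a2 by simp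
    next
      case False
      have lz: "length (z @ [b]) \<le> length u" using uz False by simp
      have qz: "q = (z @ [b]) @ s" using Z(3) by simp
      obtain w2 where uw: "u = (z @ [b]) @ w2" using pref_common[OF U(1) qz lz] by blast
      have "fs m k q r = z @ b # (w2 @ [d])" using F uw by simp
      moreover have "z @ b # (w2 @ [d]) < z @ d' # []" by (rule lex_diff) (use bm d'm in simp)
      ultimately have "fs m k q r < fs m k q' r'" using F'' by simp
      then show False using a2 by simp
    qed
  next
    case iii
    obtain w2 where "u' = (z @ [a]) @ w2"
      using pref_common[of q' u' "c' # replicate e' 0" "z @ [a]" s'] U'(1) Z(2) iii by auto
    then have "fs m k q' r' = z @ a # (w2 @ [d'])" using F' by simp
    then have "fs m k q' r' < q" using Z(3) ab lex_diff by simp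
    then show False using a1 by simp
  qed
qed


lemma image:
  assumes "d \<in> cands Q m n"
  shows "(\<exists>q\<in>Q. \<exists>r. 1 \<le> r \<and> r \<le> k \<and> d = fs m k q r) \<or> (\<exists>j. d = [j] \<and> m + k \<le> j)"
proof -
  obtain x j where X: "d = x @ [j]" "x \<in> spref Q" "m \<le> j" "j < n" using assms unfolding cands_def by blast
  define t where "t = j - m"
  have jt: "j = m + t" using X(3) t_def by simp
  have tl: "t < (m - 1) * k" using X(4) nk jt by (simp add: mult.commute)
  show ?thesis
  proof (cases "x = []")
    case True
    show ?thesis
    proof (cases "t < k")
      case True2: True
      obtain e where e: "x @ (m - 1) # replicate e 0 \<in> Q" using Q_ext[OF QC m2 X(2), of "m - 1"] m2 by auto
      have "m - 1 \<noteq> 0" using m2 by simp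
      then have "fs m k (x @ (m - 1) # replicate e 0) (t + 1) = x @ [m + (m - 1 - (m - 1)) * k + (t + 1) - 1]"
        by (rule fs_eq)
      also have "\<dots> = d" using X(1) jt by simp
      finally show ?thesis using e True2 by force
    next
      case False
      then show ?thesis using X(1) True jt by auto
    qed
  next
    case False
    define b where "b = m - 1 - t div k"
    define r where "r = t mod k + 1"
    have tk: "t div k < m - 1" using tl by (simp add: less_mult_imp_div_less)
    then have b: "b < m" "b \<noteq> 0" using b_def by auto
    obtain e where e: "x @ b # replicate e 0 \<in> Q" using Q_ext[OF QC m2 X(2) b(1)] False by auto
    have "fs m k (x @ b # replicate e 0) r = x @ [m + (m - 1 - b) * k + r - 1]" using b(2) by (rule fs_eq)
    also have "m - 1 - b = t div k" using b_def tk by simp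
    also have "m + t div k * k + r - 1 = j" using r_def jt by simp
    finally have "fs m k (x @ b # replicate e 0) r = d" using X(1) by simp
    moreover have tm: "t mod k < k" using k1 by simp
    moreover have "1 \<le> r" "r \<le> k" unfolding r_def using tm by linarith+
    ultimately show ?thesis using e by blast
  qed
qed

lemma earlier:
  assumes q: "q \<in> Q" and r: "1 \<le> r" "r \<le> k" and d: "d \<in> cands Q m n" "q < d" "d < fs m k q r"
  shows "\<exists>q'\<in>Q. \<exists>r'. 1 \<le> r' \<and> r' \<le> k \<and> d = fs m k q' r' \<and> (q < q' \<or> (q' = q \<and> r' < r))"
proof -
  from image[OF d(1)] consider (a) q' r' where "q' \<in> Q" "1 \<le> r'" "r' \<le> k" "d = fs m k q' r'"
    | (b) j where "d = [j]" "m + k \<le> j" by blast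
  then show ?thesis
  proof cases
    case b
    obtain u c e where U: "q = u @ c # replicate e 0" "c \<noteq> 0" "c < m" "u = [] \<longrightarrow> c = m - 1"
      "u \<noteq> [] \<longrightarrow> hd u = m - 1" using Q_decomp[OF QC m2 q] by blast
    have F: "fs m k q r = u @ [m + (m - 1 - c) * k + r - 1]" using U fs_eq by simp
    have "fs m k q r < [j]"
    proof (cases "u = []")
      case True
      then have "fs m k q r = [m + r - 1]" using F U by simp
      moreover have "m + r - 1 < j" using r b by simp
      ultimately show ?thesis by simp
    next
      case False
      then obtain u2 where "u = (m - 1) # u2" using U(5) by (metis list.collapse)
      then have "fs m k q r = (m - 1) # (u2 @ [m + (m - 1 - c) * k + r - 1])" using F by simp
      moreover have "m - 1 < j" using b m2 by simp
      ultimately show ?thesis by simp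
    qed
    then show ?thesis using d(3) b by simp
  next
    case a
    show ?thesis
    proof (cases "q' = q")
      case True
      obtain u c e where U: "q = u @ c # replicate e 0" "c \<noteq> 0" using Q_decomp[OF QC m2 q] by blast
      have "u @ [m + (m - 1 - c) * k + r' - 1] < u @ [m + (m - 1 - c) * k + r - 1]"
        using d(3) a(4) True U fs_eq by simp
      then have "m + (m - 1 - c) * k + r' - 1 < m + (m - 1 - c) * k + r - 1"
        unfolding append_less_iff by simp
      then have "r' < r" using a(2) r(1) by simp
      then show ?thesis using a True by blast
    next
      case False
      have "\<not> q' < q" using crux[OF q a(1) _ r a(2,3)] d a(4) by blast
      then have "q < q'" using False by simp
      then show ?thesis using a by blast
    qed
  qed
qed

lemma greedy: "t \<le> card Q * k \<Longrightarrow>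
  succ_opt Q m n k t = Some (map (\<lambda>t. fs m k (pel Q (t div k + 1)) (t mod k + 1)) [0..<t])"
proof (induct t)
  case 0 show ?case by simp
next
  case (Suc t)
  define G where "G = (\<lambda>t. fs m k (pel Q (t div k + 1)) (t mod k + 1))"
  have tl: "t < card Q * k" using Suc.prems by simp
  have IH: "succ_opt Q m n k t = Some (map G [0..<t])" using Suc tl G_def by simp
  define s where "s = t div k + 1"
  define r where "r = t mod k + 1"
  have "t div k < card Q" using tl by (simp add: less_mult_imp_div_less)
  then have s: "1 \<le> s" "s \<le> card Q" using s_def by auto
  have tm: "t mod k < k" using k1 by simp
  have r: "1 \<le> r" "r \<le> k" unfolding r_def using tm by linarith+
  define q where "q = pel Q s"
  have q: "q \<in> Q" "pos Q q = s" using pel_props[OF fin s] q_def by auto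
  have Gt: "G t = fs m k q r" by (simp add: G_def q_def s_def r_def)
  have tdec: "t = (r - 1) + (s - 1) * k" using r_def s_def by simp
  define C where "C = {c \<in> cands Q m n. dict_less (pel Q (t div k + 1)) c \<and> c \<notin> set (map G [0..<t])}"
  have Gnot: "G t \<notin> set (map G [0..<t])"
  proof
    assume "G t \<in> set (map G [0..<t])"
    then obtain t' where t': "t' < t" "G t' = G t" by auto
    define s' where "s' = t' div k + 1"
    define r' where "r' = t' mod k + 1"
    have "t' div k < card Q" using tl t' by (simp add: less_mult_imp_div_less)
    then have s': "1 \<le> s'" "s' \<le> card Q" using s'_def by auto
    have tm': "t' mod k < k" using k1 by simp
    have r': "1 \<le> r'" "r' \<le> k" unfolding r'_def using tm' by linarith+
    have q': "pel Q s' \<in> Q" "pos Q (pel Q s') = s'" using pel_props[OF fin s'] by auto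
    have "fs m k (pel Q s') r' = fs m k q r" using t'(2) Gt by (simp add: G_def s'_def r'_def)
    from fs_inj[OF q'(1) q(1) r' r this] have "pel Q s' = q" "r' = r" by auto
    then have "s' = s" using q q' by simp
    have a1: "t' mod k = r - 1" "t' div k = s - 1" using \<open>r' = r\<close> \<open>s' = s\<close> r'_def s'_def by auto
    have "t' = t' mod k + (t' div k) * k" by simp
    then have "t' = t" using tdec a1 by simp
    then show False using t' by simp
  qed
  have GC: "G t \<in> C" using fs_cand[OF q(1) r] Gnot Gt unfolding C_def dict_less_iff q_def s_def by auto
  have Gmin: "\<forall>d\<in>C. G t \<le> d"
  proof
    fix d assume dC: "d \<in> C"
    show "G t \<le> d"
    proof (rule ccontr)
      assume "\<not> G t \<le> d"
      then have dl: "d < fs m k q r" using Gt by simp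
      have dc: "d \<in> cands Q m n" "q < d" using dC unfolding C_def dict_less_iff q_def s_def by auto
      obtain q' r' where E: "q' \<in> Q" "1 \<le> r'" "r' \<le> k" "d = fs m k q' r'" "q < q' \<or> (q' = q \<and> r' < r)"
        using earlier[OF q(1) r dc dl] by blast
      define t' where "t' = (r' - 1) + (pos Q q' - 1) * k"
      have pq': "1 \<le> pos Q q'" "pos Q q' \<le> card Q" using pos_range[OF fin E(1)] by auto
      have rk: "r' - 1 < k" using E k1 by simp
      have dm: "t' div k = pos Q q' - 1 \<and> t' mod k = r' - 1" using divmod_aux[OF rk] t'_def by simp
      have "G t' = fs m k (pel Q (pos Q q')) r'" using dm pq' E(2) by (simp add: G_def)
      also have "\<dots> = d" using pel_pos[OF fin E(1)] E(4) by simp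
      finally have Gd: "G t' = d" .
      have "t' < t"
      proof (cases "q < q'")
        case True
        then have "pos Q q' < s" using pos_mono[OF fin q(1) E(1)] q(2) by simp
        then have "(pos Q q' - 1 + 1) * k \<le> (s - 1) * k" using pq' by (intro mult_le_mono1) linarith
        then have "(pos Q q' - 1) * k + k \<le> (s - 1) * k" by (simp add: algebra_simps)
        then show ?thesis using tdec t'_def rk by linarith
      next
        case False
        then have "q' = q" "r' < r" using E(5) by auto
        then have "pos Q q' = s" "r' < r" using q(2) by auto
        then have "t' = (r' - 1) + (s - 1) * k" using t'_def by simp
        then show ?thesis using tdec \<open>r' < r\<close> E(2) by linarith
      qed
      then have "d \<in> set (map G [0..<t])" using Gd by force
      then show False using dC unfolding C_def by simp
    qed
  qed
  have dm: "dict_min C = G t"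
    unfolding dict_min_def
  proof (rule the_equality)
    show "G t \<in> C \<and> (\<forall>d\<in>C. dict_le (G t) d)" using GC Gmin dict_le_iff by auto
  next
    fix c assume "c \<in> C \<and> (\<forall>d\<in>C. dict_le c d)"
    then have "c \<le> G t" "G t \<le> c" using GC Gmin dict_le_iff by auto
    then show "c = G t" by simp
  qed
  have "succ_opt Q m n k (Suc t) = (if C = {} then None else Some (map G [0..<t] @ [dict_min C]))"
    by (simp add: IH C_def Let_def)
  also have "\<dots> = Some (map G [0..<t] @ [G t])" using GC dm by auto
  finally show ?case by (simp add: G_def)
qed

lemma succ_val: assumes "1 \<le> s" "s \<le> card Q" "1 \<le> r" "r \<le> k"
  shows "succ_opt Q m n k (s * k) \<noteq> None \<and> succ Q m n k s r = fs m k (pel Q s) r"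
proof -
  define G where "G = (\<lambda>t. fs m k (pel Q (t div k + 1)) (t mod k + 1))"
  have g: "succ_opt Q m n k (s * k) = Some (map G [0..<s * k])"
    using greedy[of "s * k"] assms G_def by simp
  define idx where "idx = (r - 1) + (s - 1) * k"
  have rk: "r - 1 < k" using assms by simp
  have dm: "idx div k = s - 1 \<and> idx mod k = r - 1" using divmod_aux[OF rk] idx_def by simp
  have "(s - 1) * k + k \<le> s * k" using assms by (cases s) auto
  then have il: "idx < s * k" using idx_def rk by linarith
  have "succ Q m n k s r = map G [0..<s * k] ! idx" unfolding succ_def g idx_def by (simp add: add.commute)
  also have "\<dots> = G idx" using il by simp
  also have "\<dots> = fs m k (pel Q s) r" using dm assms by (simp add: G_def)
  finally show ?thesis using g by simp
qed

end

lemma QC_Pt: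
  assumes QC: "QC m P" and m2: "2 \<le> m" and p: "p \<in> P"
  shows "QC m ((P - {p}) \<union> {p @ [j] | j. j < m})"
proof -
  define Pt where "Pt = (P - {p}) \<union> {p @ [j] | j. j < m}"
  obtain p' where p': "p = (m - 1) # p'" "set p' \<subseteq> {0..<m}" using QC_elem[OF QC p] by blast
  have fin: "finite Pt" using QC unfolding QC_def Pt_def by auto
  have sub: "Pt \<subseteq> {(m - 1) # w | w. w \<in> words m}"
  proof
    fix x assume "x \<in> Pt"
    then consider "x \<in> P" | j where "j < m" "x = p @ [j]" unfolding Pt_def by blast
    then show "x \<in> {(m - 1) # w | w. w \<in> words m}"
    proof cases
      case 1 then show ?thesis using QC unfolding QC_def by blast
    next
      case 2 then show ?thesis using p' unfolding words_def by auto
    qed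
  qed
  have free: "\<forall>u\<in>{w. (m - 1) # w \<in> Pt}. \<forall>v\<in>{w. (m - 1) # w \<in> Pt}. \<not> Defs.strict_prefix u v"
  proof (intro ballI notI)
    fix u v assume u: "u \<in> {w. (m - 1) # w \<in> Pt}" and v: "v \<in> {w. (m - 1) # w \<in> Pt}"
      and sp: "Defs.strict_prefix u v"
    obtain w where w: "w \<noteq> []" "v = u @ w" using sp unfolding Defs.strict_prefix_def by blast
    define U where "U = (m - 1) # u"
    define V where "V = (m - 1) # v"
    have UV: "V = U @ w" using w U_def V_def by simp
    have UP: "U \<in> Pt" "V \<in> Pt" using u v U_def V_def by auto
    consider "U \<in> P" "U \<noteq> p" | j where "j < m" "U = p @ [j]" using UP(1) unfolding Pt_def by blast
    then show False
    proof cases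
      case 1
      consider "V \<in> P" "V \<noteq> p" | j' where "j' < m" "V = p @ [j']" using UP(2) unfolding Pt_def by blast
      then show False
      proof cases
        case 1
        then have "U = V" using QC_free[OF QC \<open>U \<in> P\<close> _] UV unfolding is_prefix_def by blast
        then show False using UV w by simp
      next
        case 2
        have "length V = length U + length w" using UV by simp
        moreover have "length V = length p + 1" using 2 by simp
        moreover have "length w \<ge> 1" using w by (cases w) auto
        ultimately have le: "length U \<le> length p" by linarith
        obtain w2 where "p = U @ w2" using pref_common[OF 2(2) UV le] by blast
        then have "U = p" using QC_free[OF QC \<open>U \<in> P\<close> p] unfolding is_prefix_def by blast
        then show False using 1 by simp
      qed
    next
      case 2
      consider "V \<in> P" "V \<noteq> p" | j' where "j' < m" "V = p @ [j']" using UP(2) unfolding Pt_def by blast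
      then show False
      proof cases
        case 1
        have "is_prefix p V" using UV 2 unfolding is_prefix_def by auto
        then have "p = V" using QC_free[OF QC p \<open>V \<in> P\<close>] by blast
        then show False using 1 by simp
      next
        case 3: 2
        then have "length V = length U" using 2 by simp
        then show False using UV w by simp
      qed
    qed
  qed
  have comp: "\<forall>w\<in>words m. \<exists>c\<in>{w. (m - 1) # w \<in> Pt}. is_prefix c w \<or> is_prefix w c"
  proof
    fix w assume w: "w \<in> words m"
    obtain c where c: "(m - 1) # c \<in> P" "is_prefix c w \<or> is_prefix w c" using QC_comp[OF QC w] by blast
    show "\<exists>c\<in>{w. (m - 1) # w \<in> Pt}. is_prefix c w \<or> is_prefix w c"
    proof (cases "(m - 1) # c = p")
      case False
      then show ?thesis using c unfolding Pt_def by blast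
    next
      case True
      then have cp: "c = p'" using p' by simp
      have p0: "(m - 1) # (c @ [0]) \<in> Pt" using True m2 unfolding Pt_def by force
      show ?thesis
      proof (cases "is_prefix c w")
        case False
        then have "is_prefix w (c @ [0])" using c(2) unfolding is_prefix_def by auto
        then show ?thesis using p0 by blast
      next
        case True
        then obtain z where z: "w = c @ z" unfolding is_prefix_def by blast
        show ?thesis
        proof (cases z)
          case Nil
          then have "is_prefix w (c @ [0])" using z unfolding is_prefix_def by auto
          then show ?thesis using p0 by blast
        next
          case (Cons j z')
          then have "j < m" using w z unfolding words_def by auto
          then have "(m - 1) # (c @ [j]) \<in> Pt" using \<open>(m - 1) # c = p\<close> unfolding Pt_def by force
          moreover have "is_prefix (c @ [j]) w" using z Cons unfolding is_prefix_def by auto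
          ultimately show ?thesis by blast
        qed
      qed
    qed
  qed
  have "complete_prefix_code m {w. (m - 1) # w \<in> Pt}"
    unfolding complete_prefix_code_def prefix_code_def using sub free comp unfolding words_def by blast
  then show ?thesis using fin sub unfolding QC_def Pt_def by blast
qed

theorem mainTheorem5:
  fixes m n k l i :: nat and P :: "nat list set"
  assumes "2 \<le> m" and "m \<le> n" and "n - m = k * (m - 1)"
    and "0 < l" and "l mod (m - 1) = m mod (m - 1)"
    and "finite P" and "card P = l"
    and "P \<subseteq> {(m - 1) # w | w. w \<in> words m}"
    and "complete_prefix_code m {w. (m - 1) # w \<in> P}"
    and "1 \<le> i" and "i \<le> l"
  shows "succ_opt P m n k (i * k) \<noteq> None \<and>
    (let p = pel P i;
         Pt = (P - {p}) \<union> {p @ [j] | j. j < m}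
     in (\<forall>j<m. succ_opt Pt m n k (pos Pt (p @ [j]) * k) \<noteq> None)
      \<and> (\<forall>j\<in>{1..m-1}. \<forall>r\<in>{1..k}.
            succ_of Pt m n k (p @ [j]) r = p @ [m + (m - 1 - j) * k + r - 1])
      \<and> (\<forall>r\<in>{1..k}. succ_of Pt m n k (p @ [0]) r = succ P m n k i r))"
proof (cases "k = 0")
  case True
  then show ?thesis by (simp add: Let_def)
next
  case False
  then have k1: "1 \<le> k" by simp
  have nk: "n = m + k * (m - 1)" using assms(2,3) by simp
  have QP: "QC m P" using assms(6,8,9) unfolding QC_def by blast
  define p where "p = pel P i"
  define Pt where "Pt = (P - {p}) \<union> {p @ [j] | j. j < m}"
  have pP: "p \<in> P" "pos P p = i" using pel_props[OF assms(6), of i] assms(7,10,11) p_def by auto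
  have QPt: "QC m Pt" using QC_Pt[OF QP assms(1) pP(1)] Pt_def by simp
  have finPt: "finite Pt" using QPt unfolding QC_def by simp
  have c1: "succ_opt P m n k (i * k) \<noteq> None"
    using succ_val[OF QP assms(1) k1 nk, of i 1] assms(7,10,11) k1 by simp
  have inPt: "p @ [j] \<in> Pt" if "j < m" for j using that Pt_def by blast
  have sv: "succ_opt Pt m n k (pos Pt (p @ [j]) * k) \<noteq> None \<and>
      succ_of Pt m n k (p @ [j]) r = fs m k (p @ [j]) r" if "j < m" "1 \<le> r" "r \<le> k" for j r
  proof -
    have pr: "1 \<le> pos Pt (p @ [j]) \<and> pos Pt (p @ [j]) \<le> card Pt" using pos_range[OF finPt inPt[OF that(1)]] .
    have "pel Pt (pos Pt (p @ [j])) = p @ [j]" using pel_pos[OF finPt inPt[OF that(1)]] .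
    then show ?thesis using succ_val[OF QPt assms(1) k1 nk, of "pos Pt (p @ [j])" r] pr that
      unfolding succ_of_def by simp
  qed
  have c2: "\<forall>j<m. succ_opt Pt m n k (pos Pt (p @ [j]) * k) \<noteq> None" using sv k1 by blast
  have c3: "\<forall>j\<in>{1..m-1}. \<forall>r\<in>{1..k}. succ_of Pt m n k (p @ [j]) r = p @ [m + (m - 1 - j) * k + r - 1]"
  proof (intro ballI)
    fix j r assume j: "j \<in> {1..m-1}" and r: "r \<in> {1..k}"
    have "j < m" "j \<noteq> 0" using j assms(1) by auto
    then have "succ_of Pt m n k (p @ [j]) r = fs m k (p @ j # replicate 0 0) r" using sv r by simp
    also have "\<dots> = p @ [m + (m - 1 - j) * k + r - 1]" using \<open>j \<noteq> 0\<close> by (rule fs_eq)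
    finally show "succ_of Pt m n k (p @ [j]) r = p @ [m + (m - 1 - j) * k + r - 1]" .
  qed
  have c4: "\<forall>r\<in>{1..k}. succ_of Pt m n k (p @ [0]) r = succ P m n k i r"
  proof
    fix r assume r: "r \<in> {1..k}"
    obtain u c e where U: "p = u @ c # replicate e 0" "c \<noteq> 0" using Q_decomp[OF QP assms(1) pP(1)] by blast
    have e0: "p @ [0] = u @ c # replicate (Suc e) 0" using U(1) by (simp add: replicate_append_same[symmetric])
    have "succ_of Pt m n k (p @ [0]) r = fs m k (p @ [0]) r" using sv r assms(1) by simp
    also have "\<dots> = u @ [m + (m - 1 - c) * k + r - 1]"
      unfolding e0 by (rule fs_eq[OF U(2)])
    also have "\<dots> = fs m k p r" unfolding U(1) by (rule fs_eq[OF U(2), symmetric])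
    also have "\<dots> = succ P m n k i r" using succ_val[OF QP assms(1) k1 nk, of i r] assms(7,10,11) r p_def by simp
    finally show "succ_of Pt m n k (p @ [0]) r = succ P m n k i r" .
  qed
  show ?thesis using c1 c2 c3 c4 unfolding Let_def p_def[symmetric] Pt_def[symmetric] by blast
qed

end
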